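(* Let $G$ be a topological group and $\pi\colon G\times X\to X$ a continuous action of $G$ on a non-archimedean uniform space $(X,\mathcal U)$ such that the action is $\pi$-uniform. Then the induced action by automorphisms $\overline\pi\colon G\times B_{NA}(X,\mathcal U)\to B_{NA}(X,\mathcal U)$, $(g,u)\mapsto gu$ (determined by $g\cdot i(x)=i(gx)$), is continuous, and the universal map $i\colon (X,\mathcal U)\to B_{NA}(X,\mathcal U)$ is a $G$-equivariant uniform embedding. In particular, $(X,\mathcal U)$ is uniformly $G$-automorphizable in $\mathbf{NA}$.
   Context: All spaces and groups are Hausdorff. A uniform space is non-archimedean if its uniformity has a base of equivalence relations; a topological group is non-archimedean ($\mathbf{NA}$) if it has a local base at the identity of open subgroups. $B_{NA}(X,\mathcal U)$ is the free Boolean non-archimedean group of $(X,\mathcal U)$: a Boolean (every non-identity element of order 2) $\mathbf{NA}$ group with a uniformly continuous map $i\colon X\to B_{NA}$ (two-sided uniformity) such that every uniformly continuous map from $X$ into a Boolean $\mathbf{NA}$ group factors uniquely as a continuous homomorphism composed with $i$; algebraically it is the free Boolean group on $X$. An action $\pi$ on $(X,\mathcal U)$ is $\pi$-uniform if for every $\varepsilon\in\mathcal U$ and $g_0\in G$ there exist $\delta\in\mathcal U$ and a neighborhood $O$ of $g_0$ with $(gx,gy)\in\varepsilon$ for all $(x,y)\in\delta$, $g\in O$. A uniform $G$-space is uniformly $G$-automorphizable in $\mathbf{NA}$ if it is a uniform $G$-subspace (with the two-sided uniformity) of some $\mathbf{NA}$ topological group on which $G$ acts continuously by automorphisms. *)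

theory Defs
  imports "HOL-Analysis.Analysis" "HOL-Algebra.Algebra"
begin

definition uniformity_on :: "'a set \<Rightarrow> ('a \<times> 'a) set set \<Rightarrow> bool" where
  "uniformity_on S U \<longleftrightarrow>
     U \<noteq> {} \<and>
     (\<forall>e\<in>U. Id_on S \<subseteq> e \<and> e \<subseteq> S \<times> S) \<and>
     (\<forall>e\<in>U. \<forall>d. e \<subseteq> d \<and> d \<subseteq> S \<times> S \<longrightarrow> d \<in> U) \<and>
     (\<forall>e\<in>U. \<forall>d\<in>U. e \<inter> d \<in> U) \<and>
     (\<forall>e\<in>U. converse e \<in> U) \<and>
     (\<forall>e\<in>U. \<exists>d\<in>U. relcomp d d \<subseteq> e) \<and>
     Inter U = Id_on S"

definition nonarch_uniformity :: "'a set \<Rightarrow> ('a \<times> 'a) set set \<Rightarrow> bool" where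
  "nonarch_uniformity S U \<longleftrightarrow> uniformity_on S U \<and>
     (\<forall>e\<in>U. \<exists>d\<in>U. equiv S d \<and> d \<subseteq> e)"

definition utop :: "'a set \<Rightarrow> ('a \<times> 'a) set set \<Rightarrow> 'a topology" where
  "utop S U = topology (\<lambda>S. S \<subseteq> S \<and> (\<forall>x\<in>S. \<exists>e\<in>U. e `` {x} \<subseteq> S))"

definition unif_continuous ::
  "'a set \<Rightarrow> ('a \<times> 'a) set set \<Rightarrow> 'b set \<Rightarrow> ('b \<times> 'b) set set \<Rightarrow> ('a \<Rightarrow> 'b) \<Rightarrow> bool" where
  "unif_continuous S U Y V f \<longleftrightarrow> f ` S \<subseteq> Y \<and>
     (\<forall>e\<in>V. \<exists>d\<in>U. \<forall>(x, y)\<in>d. (f x, f y) \<in> e)"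

definition unif_embedding ::
  "'a set \<Rightarrow> ('a \<times> 'a) set set \<Rightarrow> 'b set \<Rightarrow> ('b \<times> 'b) set set \<Rightarrow> ('a \<Rightarrow> 'b) \<Rightarrow> bool" where
  "unif_embedding S U Y V f \<longleftrightarrow> inj_on f S \<and> unif_continuous S U Y V f \<and>
     (\<forall>d\<in>U. \<exists>e\<in>V. \<forall>x\<in>S. \<forall>y\<in>S. (f x, f y) \<in> e \<longrightarrow> (x, y) \<in> d)"

definition topological_group :: "('g, 'm) monoid_scheme \<Rightarrow> 'g topology \<Rightarrow> bool" where
  "topological_group G T \<longleftrightarrow> group G \<and> topspace T = carrier G \<and> Hausdorff_space T \<and>
     continuous_map (prod_topology T T) T (\<lambda>(x, y). x \<otimes>\<^bsub>G\<^esub> y) \<and>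
     continuous_map T T (\<lambda>x. inv\<^bsub>G\<^esub> x)"

text \<open>Two-sided uniformity (supremum of the left and right uniformities).\<close>
definition two_sided_unif :: "('g, 'm) monoid_scheme \<Rightarrow> 'g topology \<Rightarrow> ('g \<times> 'g) set set" where
  "two_sided_unif G T = {e. e \<subseteq> carrier G \<times> carrier G \<and>
     (\<exists>V. openin T V \<and> \<one>\<^bsub>G\<^esub> \<in> V \<and>
        {(x, y). x \<in> carrier G \<and> y \<in> carrier G \<and>
                 inv\<^bsub>G\<^esub> x \<otimes>\<^bsub>G\<^esub> y \<in> V \<and> y \<otimes>\<^bsub>G\<^esub> inv\<^bsub>G\<^esub> x \<in> V} \<subseteq> e)}"

definition NA_group :: "('g, 'm) monoid_scheme \<Rightarrow> 'g topology \<Rightarrow> bool" where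
  "NA_group G T \<longleftrightarrow> topological_group G T \<and>
     (\<forall>W. openin T W \<and> \<one>\<^bsub>G\<^esub> \<in> W \<longrightarrow>
        (\<exists>H. subgroup H G \<and> openin T H \<and> H \<subseteq> W))"

definition boolean_group :: "('g, 'm) monoid_scheme \<Rightarrow> bool" where
  "boolean_group G \<longleftrightarrow> (\<forall>x\<in>carrier G. x \<otimes>\<^bsub>G\<^esub> x = \<one>\<^bsub>G\<^esub>)"

definition free_boolean_on :: "'b monoid \<Rightarrow> 'a set \<Rightarrow> ('a \<Rightarrow> 'b) \<Rightarrow> bool" where
  "free_boolean_on B S i \<longleftrightarrow> i ` S \<subseteq> carrier B \<and> inj_on i S \<and>
     carrier B = generate B (i ` S) \<and>
     (\<forall>F. finite F \<and> F \<subseteq> S \<and> F \<noteq> {} \<longrightarrow> finprod B i F \<noteq> \<one>\<^bsub>B\<^esub>)"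

text \<open>(B, TB, i) is the free Boolean NA group of (S, U).  The universal property is
  quantified over Boolean NA groups whose elements live in the same type as those of B
  (a HOL limitation).\<close>
definition free_boolean_NA ::
  "'a set \<Rightarrow> ('a \<times> 'a) set set \<Rightarrow> 'b monoid \<Rightarrow> 'b topology \<Rightarrow> ('a \<Rightarrow> 'b) \<Rightarrow> bool" where
  "free_boolean_NA S U B TB i \<longleftrightarrow>
     NA_group B TB \<and> boolean_group B \<and> free_boolean_on B S i \<and>
     unif_continuous S U (carrier B) (two_sided_unif B TB) i \<and>
     (\<forall>(K :: 'b monoid) TK f.
        NA_group K TK \<and> boolean_group K \<and>
        unif_continuous S U (carrier K) (two_sided_unif K TK) f \<longrightarrow>
        (\<exists>h. h \<in> hom B K \<and> continuous_map TB TK h \<and> (\<forall>x\<in>S. h (i x) = f x) \<and>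
           (\<forall>h'. h' \<in> hom B K \<and> continuous_map TB TK h' \<and> (\<forall>x\<in>S. h' (i x) = f x)
                 \<longrightarrow> (\<forall>u\<in>carrier B. h' u = h u))))"

definition group_action_on :: "'g monoid \<Rightarrow> 'a set \<Rightarrow> ('g \<Rightarrow> 'a \<Rightarrow> 'a) \<Rightarrow> bool" where
  "group_action_on G S \<pi> \<longleftrightarrow>
     (\<forall>g\<in>carrier G. \<forall>x\<in>S. \<pi> g x \<in> S) \<and>
     (\<forall>x\<in>S. \<pi> \<one>\<^bsub>G\<^esub> x = x) \<and>
     (\<forall>g\<in>carrier G. \<forall>h\<in>carrier G. \<forall>x\<in>S. \<pi> (g \<otimes>\<^bsub>G\<^esub> h) x = \<pi> g (\<pi> h x))"

definition pi_uniform ::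
  "'g topology \<Rightarrow> 'a set \<Rightarrow> ('a \<times> 'a) set set \<Rightarrow> ('g \<Rightarrow> 'a \<Rightarrow> 'a) \<Rightarrow> bool" where
  "pi_uniform T S U \<pi> \<longleftrightarrow>
     (\<forall>e\<in>U. \<forall>g0\<in>topspace T. \<exists>d\<in>U. \<exists>N. openin T N \<and> g0 \<in> N \<and>
        (\<forall>(x, y)\<in>d. \<forall>g\<in>N. (\<pi> g x, \<pi> g y) \<in> e))"

definition cont_action_by_automorphisms ::
  "'g monoid \<Rightarrow> 'g topology \<Rightarrow> 'b monoid \<Rightarrow> 'b topology \<Rightarrow> ('g \<Rightarrow> 'b \<Rightarrow> 'b) \<Rightarrow> bool" where
  "cont_action_by_automorphisms G T K TK act \<longleftrightarrow>
     group_action_on G (carrier K) act \<and>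
     (\<forall>g\<in>carrier G. act g \<in> iso K K) \<and>
     continuous_map (prod_topology T TK) TK (\<lambda>(g, u). act g u)"

text \<open>Uniform G-automorphizability in NA; the witness group lives in the type 'b.\<close>
definition unif_G_automorphizable_NA ::
  "'b itself \<Rightarrow> 'g monoid \<Rightarrow> 'g topology \<Rightarrow> 'a set \<Rightarrow> ('a \<times> 'a) set set \<Rightarrow> ('g \<Rightarrow> 'a \<Rightarrow> 'a) \<Rightarrow> bool" where
  "unif_G_automorphizable_NA _ G T S U \<pi> \<longleftrightarrow>
     (\<exists>(K :: 'b monoid) TK act j.
        NA_group K TK \<and> cont_action_by_automorphisms G T K TK act \<and>
        unif_embedding S U (carrier K) (two_sided_unif K TK) j \<and>
        (\<forall>g\<in>carrier G. \<forall>x\<in>S. j (\<pi> g x) = act g (j x)))"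

end

theory Submission
  imports Defs
begin

lemma bool_inv:
  assumes "group B" "boolean_group B" "x \<in> carrier B"
  shows "inv\<^bsub>B\<^esub> x = x"
  using assms by (metis boolean_group_def group.inv_equality)

lemma bool_comm:
  assumes "group B" "boolean_group B" "x \<in> carrier B" "y \<in> carrier B"
  shows "x \<otimes>\<^bsub>B\<^esub> y = y \<otimes>\<^bsub>B\<^esub> x"
proof -
  have "x \<otimes>\<^bsub>B\<^esub> y = inv\<^bsub>B\<^esub> (x \<otimes>\<^bsub>B\<^esub> y)" using bool_inv assms group.subgroupE(4) group.subgroup_self by metis
  also have "\<dots> = inv\<^bsub>B\<^esub> y \<otimes>\<^bsub>B\<^esub> inv\<^bsub>B\<^esub> x" using assms group.inv_mult_group by metis
  also have "\<dots> = y \<otimes>\<^bsub>B\<^esub> x" using bool_inv assms by metis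
  finally show ?thesis .
qed

lemma bool_comm_group:
  assumes "group B" "boolean_group B"
  shows "comm_group B"
  using assms bool_comm group.group_comm_groupI by metis

lemma unif_p1: "uniformity_on S U \<Longrightarrow> U \<noteq> {}"
  unfolding uniformity_on_def by (elim conjE) assumption
lemma unif_p2: "uniformity_on S U \<Longrightarrow> (\<forall>e\<in>U. Id_on S \<subseteq> e \<and> e \<subseteq> S \<times> S)"
  unfolding uniformity_on_def by (elim conjE) assumption
lemma unif_p3: "uniformity_on S U \<Longrightarrow> (\<forall>e\<in>U. \<forall>d. e \<subseteq> d \<and> d \<subseteq> S \<times> S \<longrightarrow> d \<in> U)"
  unfolding uniformity_on_def by (elim conjE) assumption
lemma unif_p4: "uniformity_on S U \<Longrightarrow> (\<forall>e\<in>U. \<forall>d\<in>U. e \<inter> d \<in> U)"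
  unfolding uniformity_on_def by (elim conjE) assumption
lemma unif_ne: "uniformity_on S U \<Longrightarrow> U \<noteq> {}"
  by (rule unif_p1)
lemma unif_sub: "uniformity_on S U \<Longrightarrow> e \<in> U \<Longrightarrow> e \<subseteq> S \<times> S"
  using unif_p2 by blast
lemma unif_int: "uniformity_on S U \<Longrightarrow> e \<in> U \<Longrightarrow> d \<in> U \<Longrightarrow> e \<inter> d \<in> U"
  using unif_p4 by blast

lemma utop_open:
  assumes "uniformity_on S U"
  shows "openin (utop S U) A \<longleftrightarrow> (\<forall>x\<in>A. \<exists>e\<in>U. e``{x} \<subseteq> A)"
proof -
  define P where "P = (\<lambda>A::'a set. A \<subseteq> A \<and> (\<forall>x\<in>A. \<exists>e\<in>U. e``{x} \<subseteq> A))"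
  have "istopology P"
    unfolding istopology_def
  proof (intro conjI allI impI)
    fix A1 A2 assume a: "P A1" "P A2"
    show "P (A1 \<inter> A2)" unfolding P_def
    proof (intro conjI ballI subset_refl)
      fix x assume "x \<in> A1 \<inter> A2"
      then obtain e1 e2 where "e1 \<in> U" "e1``{x} \<subseteq> A1" "e2 \<in> U" "e2``{x} \<subseteq> A2" using a unfolding P_def by blast
      moreover have "e1 \<inter> e2 \<in> U" using unif_int[OF assms] \<open>e1 \<in> U\<close> \<open>e2 \<in> U\<close> by blast
      moreover have "(e1 \<inter> e2)``{x} \<subseteq> A1 \<inter> A2" using calculation by blast
      ultimately show "\<exists>e\<in>U. e``{x} \<subseteq> A1 \<inter> A2" by (metis (no_types, lifting))
    qed
  next
    fix K assume "\<forall>A\<in>K. P A"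
    then have "\<forall>A\<in>K. \<forall>x\<in>A. \<exists>e\<in>U. e``{x} \<subseteq> A" unfolding P_def by simp
    then have "\<forall>x\<in>\<Union>K. \<exists>e\<in>U. e``{x} \<subseteq> \<Union>K" by (meson Union_upper order_trans UnionE)
    then show "P (\<Union>K)" unfolding P_def by simp
  qed
  moreover have "utop S U = topology P" unfolding utop_def P_def by simp
  ultimately show ?thesis by (simp add: topology_inverse' P_def)
qed

lemma utop_topspace:
  assumes "uniformity_on S U"
  shows "topspace (utop S U) = UNIV"
proof -
  obtain e where "e \<in> U" using unif_ne[OF assms] by blast
  then have "openin (utop S U) UNIV" using utop_open[OF assms] by blast
  then show ?thesis using openin_subset by blast
qed

lemma utop_class_open:
  assumes "uniformity_on S U" "d \<in> U" "equiv S d"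
  shows "openin (utop S U) (d``{z})"
  unfolding utop_open[OF assms(1)]
proof
  fix y assume "y \<in> d``{z}"
  then have "d``{y} \<subseteq> d``{z}" using assms(3) unfolding equiv_def trans_def by blast
  then show "\<exists>e\<in>U. e``{y} \<subseteq> d``{z}" using assms(2) by blast
qed

lemma discrete_NA:
  assumes "group K"
  shows "NA_group K (discrete_topology (carrier K))"
proof -
  interpret group K by fact
  have "continuous_map (prod_topology (discrete_topology (carrier K)) (discrete_topology (carrier K)))
          (discrete_topology (carrier K)) (\<lambda>(x, y). x \<otimes>\<^bsub>K\<^esub> y)"
    unfolding prod_topology_discrete_topology[symmetric] by auto
  moreover have "continuous_map (discrete_topology (carrier K)) (discrete_topology (carrier K)) (\<lambda>x. inv\<^bsub>K\<^esub> x)"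
    by auto
  ultimately have "topological_group K (discrete_topology (carrier K))"
    unfolding topological_group_def by (simp add: assms)
  moreover have "\<exists>H. subgroup H K \<and> openin (discrete_topology (carrier K)) H \<and> H \<subseteq> W"
    if "openin (discrete_topology (carrier K)) W" "\<one>\<^bsub>K\<^esub> \<in> W" for W
    using that triv_subgroup by (intro exI[of _ "{\<one>\<^bsub>K\<^esub>}"]) auto
  ultimately show ?thesis unfolding NA_group_def by blast
qed

lemma unif_cont_const_on_d:
  assumes "group K" "f ` S \<subseteq> carrier K" "d \<in> U" "uniformity_on S U"
    "\<And>x y. (x, y) \<in> d \<Longrightarrow> f x = f y"
  shows "unif_continuous S U (carrier K) (two_sided_unif K TK) f"
  unfolding unif_continuous_def
proof (intro conjI ballI)
  show "f ` S \<subseteq> carrier K" by fact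
  fix e assume "e \<in> two_sided_unif K TK"
  then obtain V where V: "\<one>\<^bsub>K\<^esub> \<in> V"
    "{(x, y). x \<in> carrier K \<and> y \<in> carrier K \<and> inv\<^bsub>K\<^esub> x \<otimes>\<^bsub>K\<^esub> y \<in> V \<and> y \<otimes>\<^bsub>K\<^esub> inv\<^bsub>K\<^esub> x \<in> V} \<subseteq> e"
    unfolding two_sided_unif_def by blast
  have "\<forall>(x, y)\<in>d. (f x, f y) \<in> e"
  proof (clarify)
    fix x y assume "(x, y) \<in> d"
    then have "x \<in> S" using unif_sub[OF assms(4,3)] by blast
    then have "f x \<in> carrier K" using assms(2) by blast
    then have "(f x, f x) \<in> e" using V group.l_inv[OF assms(1)] group.r_inv[OF assms(1)] by auto
    then show "(f x, f y) \<in> e" using assms(5)[OF \<open>(x, y) \<in> d\<close>] by simp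
  qed
  then show "\<exists>d\<in>U. \<forall>(x, y)\<in>d. (f x, f y) \<in> e" using assms(3) by blast
qed

locale boolgrp = comm_group G for G (structure) +
  assumes sq: "x \<in> carrier G \<Longrightarrow> x \<otimes> x = \<one>"

lemma boolgrpI:
  assumes "group B" "boolean_group B" shows "boolgrp B"
proof -
  have "comm_group B" by (rule bool_comm_group[OF assms])
  then show ?thesis using assms(2) unfolding boolgrp_def boolgrp_axioms_def boolean_group_def by blast
qed

context boolgrp
begin

lemma binv: "x \<in> carrier G \<Longrightarrow> inv x = x"
  using sq inv_equality by blast

definition rep :: "'a set \<Rightarrow> 'a \<Rightarrow> 'a" where
  "rep N a = (SOME r. r \<in> carrier G \<and> r \<otimes> a \<in> N)"

definition qgrp :: "'a set \<Rightarrow> 'a monoid" where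
  "qgrp N = \<lparr>carrier = rep N ` carrier G, mult = \<lambda>a b. rep N (a \<otimes> b), one = rep N \<one>\<rparr>"

lemma R1:
  assumes "subgroup N G" "a \<in> carrier G"
  shows "rep N a \<in> carrier G \<and> rep N a \<otimes> a \<in> N"
proof -
  have "a \<in> carrier G \<and> a \<otimes> a \<in> N" using assms sq subgroup.one_closed by metis
  then show ?thesis unfolding rep_def by (rule someI)
qed

lemma R2:
  assumes "subgroup N G" "a \<in> carrier G" "b \<in> carrier G" "a \<otimes> b \<in> N"
  shows "rep N a = rep N b"
proof -
  have "(r \<in> carrier G \<and> r \<otimes> a \<in> N) \<longleftrightarrow> (r \<in> carrier G \<and> r \<otimes> b \<in> N)" for r
  proof (cases "r \<in> carrier G")
    case True
    have e1: "r \<otimes> b = (r \<otimes> a) \<otimes> (a \<otimes> b)" using True assms sq by (simp add: m_assoc[symmetric])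
      (metis True assms(2) m_assoc r_one sq)
    have e2: "r \<otimes> a = (r \<otimes> b) \<otimes> (a \<otimes> b)" using True assms sq
      by (metis m_assoc m_comm m_closed r_one)
    show ?thesis using e1 e2 assms(1,4) subgroup.m_closed by metis
  qed simp
  then show ?thesis unfolding rep_def by simp
qed

lemma R3:
  assumes "subgroup N G" "a \<in> carrier G" "b \<in> carrier G" "rep N a = rep N b"
  shows "a \<otimes> b \<in> N"
proof -
  have 1: "rep N a \<otimes> a \<in> N" "rep N a \<otimes> b \<in> N" "rep N a \<in> carrier G"
    using R1[OF assms(1,2)] R1[OF assms(1,3)] assms(4) by auto
  have "(rep N a \<otimes> a) \<otimes> (rep N a \<otimes> b) = a \<otimes> b"
    using 1(3) assms sq by (metis m_assoc m_comm m_closed l_one)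
  then show ?thesis using 1 assms(1) subgroup.m_closed by metis
qed

lemma R4:
  assumes "subgroup N G" "a \<in> carrier G"
  shows "rep N (rep N a) = rep N a"
  using R1[OF assms] R2[OF assms(1)] assms(2) by blast

lemma R5:
  assumes "subgroup N G" "a \<in> carrier G" "b \<in> carrier G"
  shows "rep N (rep N a \<otimes> b) = rep N (a \<otimes> b)"
proof (rule R2[OF assms(1)])
  have c: "rep N a \<in> carrier G" "rep N a \<otimes> a \<in> N" using R1[OF assms(1,2)] by auto
  show "rep N a \<otimes> b \<in> carrier G" "a \<otimes> b \<in> carrier G" using c assms by auto
  have "(rep N a \<otimes> b) \<otimes> (a \<otimes> b) = rep N a \<otimes> a"
    using c assms sq by (metis m_assoc m_comm m_closed r_one)
  then show "(rep N a \<otimes> b) \<otimes> (a \<otimes> b) \<in> N" using c by simp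
qed

lemma R5':
  assumes "subgroup N G" "a \<in> carrier G" "b \<in> carrier G"
  shows "rep N (a \<otimes> rep N b) = rep N (a \<otimes> b)"
  using R5[OF assms(1,3,2)] R1[OF assms(1,3)] assms m_comm by metis

lemma qgrp_carrier: "carrier (qgrp N) = rep N ` carrier G"
  by (simp add: qgrp_def)
lemma qgrp_mult: "a \<otimes>\<^bsub>qgrp N\<^esub> b = rep N (a \<otimes> b)"
  by (simp add: qgrp_def)
lemma qgrp_one: "\<one>\<^bsub>qgrp N\<^esub> = rep N \<one>"
  by (simp add: qgrp_def)

lemma qgrp_group:
  assumes "subgroup N G"
  shows "group (qgrp N)"
proof (rule groupI)
  note R = R1[OF assms] R4[OF assms] R5[OF assms] R5'[OF assms]
  fix x y z assume x: "x \<in> carrier (qgrp N)" and y: "y \<in> carrier (qgrp N)" and z: "z \<in> carrier (qgrp N)"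
  obtain a where a: "a \<in> carrier G" "x = rep N a" using x qgrp_carrier by blast
  obtain b where b: "b \<in> carrier G" "y = rep N b" using y qgrp_carrier by blast
  obtain c where c: "c \<in> carrier G" "z = rep N c" using z qgrp_carrier by blast
  have xc: "x \<in> carrier G" "y \<in> carrier G" "z \<in> carrier G" using a b c R by auto
  show "x \<otimes>\<^bsub>qgrp N\<^esub> y \<otimes>\<^bsub>qgrp N\<^esub> z = x \<otimes>\<^bsub>qgrp N\<^esub> (y \<otimes>\<^bsub>qgrp N\<^esub> z)"
    unfolding qgrp_mult using xc R by (simp add: m_assoc)
next
  fix x y assume x: "x \<in> carrier (qgrp N)" and y: "y \<in> carrier (qgrp N)"
  have "x \<in> carrier G" "y \<in> carrier G" using x y R1[OF assms] qgrp_carrier by auto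
  then show "x \<otimes>\<^bsub>qgrp N\<^esub> y \<in> carrier (qgrp N)" unfolding qgrp_mult qgrp_carrier by auto
next
  show "\<one>\<^bsub>qgrp N\<^esub> \<in> carrier (qgrp N)" unfolding qgrp_one qgrp_carrier by auto
next
  fix x assume x: "x \<in> carrier (qgrp N)"
  obtain a where a: "a \<in> carrier G" "x = rep N a" using x qgrp_carrier by blast
  have xc: "x \<in> carrier G" "rep N x = x" using a R1[OF assms] R4[OF assms] by auto
  show "\<one>\<^bsub>qgrp N\<^esub> \<otimes>\<^bsub>qgrp N\<^esub> x = x"
    unfolding qgrp_mult qgrp_one using R5[OF assms one_closed xc(1)] xc by simp
  show "\<exists>y\<in>carrier (qgrp N). y \<otimes>\<^bsub>qgrp N\<^esub> x = \<one>\<^bsub>qgrp N\<^esub>"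
    using x xc sq unfolding qgrp_mult qgrp_one by metis
qed

lemma qgrp_boolean:
  assumes "subgroup N G"
  shows "boolean_group (qgrp N)"
  unfolding boolean_group_def qgrp_mult qgrp_one
  using R1[OF assms] qgrp_carrier sq by auto

lemma rep_hom:
  assumes "subgroup N G"
  shows "rep N \<in> hom G (qgrp N)"
  unfolding hom_def qgrp_mult qgrp_carrier
  using R5[OF assms] R5'[OF assms] R1[OF assms] by auto

end

lemma ghom: "group G \<Longrightarrow> group H \<Longrightarrow> h \<in> hom G H \<Longrightarrow> group_hom G H h"
  by (simp add: group_hom_def group_hom_axioms_def)

definition Xset :: "'b monoid \<Rightarrow> ('a \<Rightarrow> 'b) \<Rightarrow> ('a \<times> 'a) set \<Rightarrow> 'b set" where
  "Xset B i d = {mult B (i x) (i y) | x y. (x, y) \<in> d}"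

locale ctx =
  fixes G :: "'g monoid" and T :: "'g topology"
    and S :: "'a set" and U :: "('a \<times> 'a) set set" and \<pi> :: "'g \<Rightarrow> 'a \<Rightarrow> 'a"
    and B :: "'b monoid" and TB :: "'b topology" and i :: "'a \<Rightarrow> 'b"
  assumes tg: "topological_group G T"
    and na: "nonarch_uniformity S U"
    and act: "group_action_on G S \<pi>"
    and cont: "continuous_map (prod_topology T (utop S U)) (utop S U) (\<lambda>(g, x). \<pi> g x)"
    and piu: "pi_uniform T S U \<pi>"
    and free: "free_boolean_NA S U B TB i"
begin

lemma BNA: "NA_group B TB" using free unfolding free_boolean_NA_def by blast
lemma Btg: "topological_group B TB" using BNA unfolding NA_group_def by blast
lemma Bgrp: "group B" using Btg unfolding topological_group_def by blast
lemma Bbool: "boolean_group B" using free unfolding free_boolean_NA_def by blast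
lemma topTB: "topspace TB = carrier B" using Btg unfolding topological_group_def by blast
lemma unif: "uniformity_on S U" using na unfolding nonarch_uniformity_def by blast
lemma nonarch: "e \<in> U \<Longrightarrow> \<exists>d\<in>U. equiv S d \<and> d \<subseteq> e" using na unfolding nonarch_uniformity_def by blast
lemma fbo: "free_boolean_on B S i" using free unfolding free_boolean_NA_def by blast
lemma iS: "x \<in> S \<Longrightarrow> i x \<in> carrier B" using fbo unfolding free_boolean_on_def by blast
lemma gen: "carrier B = generate B (i ` S)" using fbo unfolding free_boolean_on_def by blast
lemma iuc: "unif_continuous S U (carrier B) (two_sided_unif B TB) i"
  using free unfolding free_boolean_NA_def by blast
lemma univ_ex:
  fixes K :: "'b monoid"
  assumes "NA_group K TK" "boolean_group K" "unif_continuous S U (carrier K) (two_sided_unif K TK) f"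
  shows "\<exists>h. h \<in> hom B K \<and> continuous_map TB TK h \<and> (\<forall>x\<in>S. h (i x) = f x)"
  using free assms unfolding free_boolean_NA_def by blast

sublocale Bb: boolgrp B using boolgrpI[OF Bgrp Bbool] .

lemma hom_agree:
  fixes K :: "'c monoid"
  assumes "group K" "h1 \<in> hom B K" "h2 \<in> hom B K" "\<And>x. x \<in> S \<Longrightarrow> h1 (i x) = h2 (i x)" "u \<in> carrier B"
  shows "h1 u = h2 u"
proof -
  interpret g1: group_hom B K h1 using ghom[OF Bgrp assms(1,2)] .
  interpret g2: group_hom B K h2 using ghom[OF Bgrp assms(1,3)] .
  have "u \<in> generate B (i`S)" using gen assms(5) by simp
  then show ?thesis
  proof (induction u rule: generate.induct)
    case one
    then show ?case by simp
  next
    case (incl h)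
    then show ?case using assms(4) by blast
  next
    case (inv h)
    then have "h \<in> carrier B" using iS by blast
    then show ?case using inv assms(4) by auto
  next
    case (eng a b)
    then have "a \<in> carrier B" "b \<in> carrier B" using gen by auto
    then show ?case using eng hom_mult assms(2,3) by metis
  qed
qed


lemma equiv_sub: "equiv S d \<Longrightarrow> (x, y) \<in> d \<Longrightarrow> x \<in> S \<and> y \<in> S"
  unfolding equiv_def refl_on_def by blast

lemma Xc: "equiv S d \<Longrightarrow> Xset B i d \<subseteq> carrier B"
  unfolding Xset_def using equiv_sub iS by blast

lemma N_sub: "equiv S d \<Longrightarrow> subgroup (generate B (Xset B i d)) B"
  using group.generate_is_subgroup[OF Bgrp Xc] .

lemma openN:
  assumes "d \<in> U" "equiv S d"
  shows "openin TB (generate B (Xset B i d))"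
proof -
  define N where "N = generate B (Xset B i d)"
  have sg: "subgroup N B" unfolding N_def by (rule N_sub[OF assms(2)])
  define K where "K = Bb.qgrp N"
  have Kg: "group K" unfolding K_def by (rule Bb.qgrp_group[OF sg])
  have Kb: "boolean_group K" unfolding K_def by (rule Bb.qgrp_boolean[OF sg])
  have Kna: "NA_group K (discrete_topology (carrier K))" by (rule discrete_NA[OF Kg])
  have uc: "unif_continuous S U (carrier K) (two_sided_unif K (discrete_topology (carrier K))) (\<lambda>x. Bb.rep N (i x))"
  proof (rule unif_cont_const_on_d[OF Kg _ assms(1) unif])
    show "(\<lambda>x. Bb.rep N (i x)) ` S \<subseteq> carrier K" unfolding K_def Bb.qgrp_carrier using iS by blast
    fix x y assume xy: "(x, y) \<in> d"
    then have "i x \<otimes>\<^bsub>B\<^esub> i y \<in> N" unfolding N_def Xset_def by (blast intro: generate.incl)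
    then show "Bb.rep N (i x) = Bb.rep N (i y)" using Bb.R2[OF sg] iS equiv_sub[OF assms(2) xy] by blast
  qed
  obtain h where h: "h \<in> hom B K" "continuous_map TB (discrete_topology (carrier K)) h"
    "\<forall>x\<in>S. h (i x) = Bb.rep N (i x)" using univ_ex[OF Kna Kb uc] by blast
  have hr: "\<forall>u\<in>carrier B. h u = Bb.rep N u"
    using hom_agree[OF Kg h(1)] Bb.rep_hom[OF sg] h(3) unfolding K_def by blast
  have Nc: "N \<subseteq> carrier B" using sg subgroup.subset by blast
  have eq: "N = {u \<in> topspace TB. h u \<in> {Bb.rep N \<one>\<^bsub>B\<^esub>}}"
  proof (intro equalityI subsetI)
    fix u assume u: "u \<in> N"
    then have uc: "u \<in> carrier B" using Nc by blast
    have "Bb.rep N u = Bb.rep N \<one>\<^bsub>B\<^esub>" using Bb.R2[OF sg uc Bb.one_closed] u uc by simp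
    then show "u \<in> {u \<in> topspace TB. h u \<in> {Bb.rep N \<one>\<^bsub>B\<^esub>}}" using hr uc topTB by simp
  next
    fix u assume "u \<in> {u \<in> topspace TB. h u \<in> {Bb.rep N \<one>\<^bsub>B\<^esub>}}"
    then have uc: "u \<in> carrier B" and "Bb.rep N u = Bb.rep N \<one>\<^bsub>B\<^esub>" using hr topTB by auto
    then have "u \<otimes>\<^bsub>B\<^esub> \<one>\<^bsub>B\<^esub> \<in> N" using Bb.R3[OF sg uc Bb.one_closed] by simp
    then show "u \<in> N" using uc by simp
  qed
  have "openin (discrete_topology (carrier K)) {Bb.rep N \<one>\<^bsub>B\<^esub>}"
    unfolding K_def Bb.qgrp_carrier by simp
  then have "openin TB {u \<in> topspace TB. h u \<in> {Bb.rep N \<one>\<^bsub>B\<^esub>}}"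
    using openin_continuous_map_preimage[OF h(2)] by blast
  then show ?thesis using eq unfolding N_def by simp
qed

lemma sepN:
  assumes "d \<in> U" "equiv S d" "x \<in> S" "y \<in> S" "i x \<otimes>\<^bsub>B\<^esub> i y \<in> generate B (Xset B i d)"
  shows "(x, y) \<in> d"
proof (rule ccontr)
  assume nd: "(x, y) \<notin> d"
  define a where "a = i x"
  have ac: "a \<in> carrier B" unfolding a_def using iS assms(3) by blast
  have "finprod B i {x} \<noteq> \<one>\<^bsub>B\<^esub>" using fbo assms(3) unfolding free_boolean_on_def by blast
  moreover have "finprod B i {x} = i x" using Bb.finprod_insert[of "{}" x i] iS assms(3) by simp
  ultimately have a1: "a \<noteq> \<one>\<^bsub>B\<^esub>" unfolding a_def by simp
  define H where "H = {\<one>\<^bsub>B\<^esub>, a}"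
  have sg: "subgroup H B"
    unfolding subgroup_def H_def using ac Bb.sq Bb.binv by auto
  define K where "K = B\<lparr>carrier := H\<rparr>"
  have Kg: "group K" unfolding K_def by (rule group.subgroup_imp_group[OF Bgrp sg])
  have Kb: "boolean_group K" unfolding K_def boolean_group_def H_def using ac Bb.sq by auto
  have Kna: "NA_group K (discrete_topology (carrier K))" by (rule discrete_NA[OF Kg])
  define f where "f = (\<lambda>z. if z \<in> d``{x} then a else \<one>\<^bsub>B\<^esub>)"
  have uc: "unif_continuous S U (carrier K) (two_sided_unif K (discrete_topology (carrier K))) f"
  proof (rule unif_cont_const_on_d[OF Kg _ assms(1) unif])
    show "f ` S \<subseteq> carrier K" unfolding K_def H_def f_def by auto
    fix z w assume zw: "(z, w) \<in> d"
    have "z \<in> d``{x} \<longleftrightarrow> w \<in> d``{x}"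
      using zw assms(2) unfolding equiv_def trans_def sym_def by blast
    then show "f z = f w" unfolding f_def by simp
  qed
  obtain h where h: "h \<in> hom B K" "\<forall>z\<in>S. h (i z) = f z"
    using univ_ex[OF Kna Kb uc] by blast
  interpret gh: group_hom B K h using ghom[OF Bgrp Kg h(1)] .
  have fsq: "f z \<otimes>\<^bsub>B\<^esub> f w = \<one>\<^bsub>B\<^esub>" if "(z, w) \<in> d" for z w
  proof -
    have "z \<in> d``{x} \<longleftrightarrow> w \<in> d``{x}"
      using that assms(2) unfolding equiv_def trans_def sym_def by blast
    then show ?thesis unfolding f_def using Bb.sq[OF ac] by auto
  qed
  have hX: "h g = \<one>\<^bsub>B\<^esub>" if gX: "g \<in> Xset B i d" for g
  proof -
    obtain z w where zw: "(z, w) \<in> d" "g = i z \<otimes>\<^bsub>B\<^esub> i w" using gX unfolding Xset_def by blast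
    have "z \<in> S" "w \<in> S" using equiv_sub[OF assms(2) zw(1)] by auto
    then have "h g = h (i z) \<otimes>\<^bsub>K\<^esub> h (i w)" using zw(2) hom_mult[OF h(1)] iS by simp
    also have "\<dots> = f z \<otimes>\<^bsub>B\<^esub> f w" using h(2) \<open>z \<in> S\<close> \<open>w \<in> S\<close> unfolding K_def by simp
    finally show ?thesis using fsq[OF zw(1)] by simp
  qed
  have hN: "h u = \<one>\<^bsub>B\<^esub>" if "u \<in> generate B (Xset B i d)" for u
    using that
  proof (induction u rule: generate.induct)
    case one
    then show ?case using gh.hom_one unfolding K_def by simp
  next
    case (incl g)
    then show ?case using hX by blast
  next
    case (inv g)
    then have "g \<in> carrier B" using Xc[OF assms(2)] by blast
    then show ?case using inv hX Bb.binv by simp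
  next
    case (eng a b)
    then have "a \<in> carrier B" "b \<in> carrier B"
      using group.generate_in_carrier[OF Bgrp Xc[OF assms(2)]] by auto
    then show ?case using eng hom_mult[OF h(1)] by (simp add: K_def)
  qed
  have "x \<in> d``{x}" using assms(2,3) unfolding equiv_def refl_on_def by blast
  moreover have "y \<notin> d``{x}" using nd by blast
  ultimately have "h (i x \<otimes>\<^bsub>B\<^esub> i y) = a"
    using hom_mult[OF h(1)] iS assms(3,4) h(2) ac unfolding f_def by (simp add: K_def)
  then show False using hN[OF assms(5)] a1 by simp
qed


lemma Ggrp: "group G" using tg unfolding topological_group_def by blast
lemma topT: "topspace T = carrier G" using tg unfolding topological_group_def by blast
lemma actS: "g \<in> carrier G \<Longrightarrow> x \<in> S \<Longrightarrow> \<pi> g x \<in> S"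
  using act unfolding group_action_on_def by blast
lemma act1: "x \<in> S \<Longrightarrow> \<pi> \<one>\<^bsub>G\<^esub> x = x"
  using act unfolding group_action_on_def by blast
lemma actm: "g \<in> carrier G \<Longrightarrow> h \<in> carrier G \<Longrightarrow> x \<in> S \<Longrightarrow> \<pi> (g \<otimes>\<^bsub>G\<^esub> h) x = \<pi> g (\<pi> h x)"
  using act unfolding group_action_on_def by blast

lemma piu_at:
  assumes "e \<in> U" "g0 \<in> carrier G"
  shows "\<exists>d\<in>U. \<exists>N. openin T N \<and> g0 \<in> N \<and> (\<forall>(x, y)\<in>d. \<forall>g\<in>N. (\<pi> g x, \<pi> g y) \<in> e)"
proof -
  have pu: "\<forall>e\<in>U. \<forall>g0\<in>topspace T. \<exists>d\<in>U. \<exists>N. openin T N \<and> g0 \<in> N \<and> (\<forall>(x, y)\<in>d. \<forall>g\<in>N. (\<pi> g x, \<pi> g y) \<in> e)"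
    using piu unfolding pi_uniform_def .
  have g0: "g0 \<in> topspace T" using assms(2) topT by simp
  show ?thesis using bspec[OF bspec[OF pu assms(1)] g0] .
qed

definition eset :: "'b set \<Rightarrow> ('b \<times> 'b) set" where
  "eset H = {(a, b). a \<in> carrier B \<and> b \<in> carrier B \<and> inv\<^bsub>B\<^esub> a \<otimes>\<^bsub>B\<^esub> b \<in> H \<and> b \<otimes>\<^bsub>B\<^esub> inv\<^bsub>B\<^esub> a \<in> H}"

lemma eset_unif: "openin TB H \<Longrightarrow> \<one>\<^bsub>B\<^esub> \<in> H \<Longrightarrow> eset H \<in> two_sided_unif B TB"
  unfolding two_sided_unif_def eset_def by blast

lemma eset_mem: "(a, b) \<in> eset H \<Longrightarrow> a \<otimes>\<^bsub>B\<^esub> b \<in> H \<and> a \<in> carrier B \<and> b \<in> carrier B"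
  unfolding eset_def using Bb.binv by auto

lemma emb: "unif_embedding S U (carrier B) (two_sided_unif B TB) i"
  unfolding unif_embedding_def
proof (intro conjI ballI)
  show "inj_on i S" using fbo unfolding free_boolean_on_def by blast
  show "unif_continuous S U (carrier B) (two_sided_unif B TB) i" by (rule iuc)
  fix d assume d: "d \<in> U"
  obtain d' where d': "d' \<in> U" "equiv S d'" "d' \<subseteq> d" using nonarch[OF d] by blast
  define N where "N = generate B (Xset B i d')"
  have sg: "subgroup N B" unfolding N_def by (rule N_sub[OF d'(2)])
  have op: "openin TB N" unfolding N_def by (rule openN[OF d'(1,2)])
  have "eset N \<in> two_sided_unif B TB" using eset_unif[OF op] subgroup.one_closed[OF sg] by blast
  moreover have "\<forall>x\<in>S. \<forall>y\<in>S. (i x, i y) \<in> eset N \<longrightarrow> (x, y) \<in> d"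
  proof (intro ballI impI)
    fix x y assume xy: "x \<in> S" "y \<in> S" "(i x, i y) \<in> eset N"
    then have "i x \<otimes>\<^bsub>B\<^esub> i y \<in> N" using eset_mem by blast
    then show "(x, y) \<in> d" using sepN[OF d'(1,2) xy(1,2)] d'(3) unfolding N_def by blast
  qed
  ultimately show "\<exists>e\<in>two_sided_unif B TB. \<forall>x\<in>S. \<forall>y\<in>S. (i x, i y) \<in> e \<longrightarrow> (x, y) \<in> d"
    by blast
qed

lemma ucg:
  assumes g: "g \<in> carrier G"
  shows "unif_continuous S U (carrier B) (two_sided_unif B TB) (\<lambda>x. i (\<pi> g x))"
  unfolding unif_continuous_def
proof (intro conjI ballI)
  show "(\<lambda>x. i (\<pi> g x)) ` S \<subseteq> carrier B" using iS actS[OF g] by blast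
  fix e assume e: "e \<in> two_sided_unif B TB"
  obtain d1 where d1: "d1 \<in> U" "\<forall>(x, y)\<in>d1. (i x, i y) \<in> e"
    using iuc e unfolding unif_continuous_def by blast
  obtain d2 N where d2: "d2 \<in> U" "openin T N" "g \<in> N" "\<forall>(x, y)\<in>d2. \<forall>g'\<in>N. (\<pi> g' x, \<pi> g' y) \<in> d1"
    using piu_at[OF d1(1) g] by blast
  have "\<forall>(x, y)\<in>d2. (i (\<pi> g x), i (\<pi> g y)) \<in> e" using d2(3,4) d1(2) by blast
  then show "\<exists>d\<in>U. \<forall>(x, y)\<in>d. (i (\<pi> g x), i (\<pi> g y)) \<in> e" using d2(1) by blast
qed

definition pb0 :: "'g \<Rightarrow> 'b \<Rightarrow> 'b" where
  "pb0 g = (SOME h. h \<in> hom B B \<and> continuous_map TB TB h \<and> (\<forall>x\<in>S. h (i x) = i (\<pi> g x)))"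

lemma pb0:
  assumes "g \<in> carrier G"
  shows "pb0 g \<in> hom B B \<and> continuous_map TB TB (pb0 g) \<and> (\<forall>x\<in>S. pb0 g (i x) = i (\<pi> g x))"
proof -
  have "\<exists>h. h \<in> hom B B \<and> continuous_map TB TB h \<and> (\<forall>x\<in>S. h (i x) = i (\<pi> g x))"
    by (rule univ_ex[OF BNA Bbool ucg[OF assms]])
  then show ?thesis unfolding pb0_def by (rule someI_ex)
qed

lemma pb0_hom: "g \<in> carrier G \<Longrightarrow> pb0 g \<in> hom B B" using pb0 by blast
lemma pb0_gen: "g \<in> carrier G \<Longrightarrow> x \<in> S \<Longrightarrow> pb0 g (i x) = i (\<pi> g x)" using pb0 by blast

lemma pb0_one: "u \<in> carrier B \<Longrightarrow> pb0 \<one>\<^bsub>G\<^esub> u = u"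
proof -
  assume u: "u \<in> carrier B"
  have idh: "(\<lambda>u. u) \<in> hom B B" unfolding hom_def by auto
  have "pb0 \<one>\<^bsub>G\<^esub> u = (\<lambda>u. u) u"
    by (rule hom_agree[OF Bgrp pb0_hom[OF monoid.one_closed[OF group.is_monoid[OF Ggrp]]] idh _ u])
       (simp add: pb0_gen[OF monoid.one_closed[OF group.is_monoid[OF Ggrp]]] act1)
  then show ?thesis by simp
qed

lemma pb0_mult:
  assumes g: "g \<in> carrier G" and h: "h \<in> carrier G" and u: "u \<in> carrier B"
  shows "pb0 (g \<otimes>\<^bsub>G\<^esub> h) u = pb0 g (pb0 h u)"
proof -
  have gh: "g \<otimes>\<^bsub>G\<^esub> h \<in> carrier G" using monoid.m_closed[OF group.is_monoid[OF Ggrp] g h] .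
  have ch: "(\<lambda>u. pb0 g (pb0 h u)) \<in> hom B B"
    using pb0_hom[OF g] pb0_hom[OF h] unfolding hom_def by (auto simp: Pi_def)
  show ?thesis
    by (rule hom_agree[OF Bgrp pb0_hom[OF gh] ch _ u])
       (simp add: pb0_gen[OF gh] pb0_gen[OF g] pb0_gen[OF h] actm[OF g h] actS[OF h])
qed

lemma pb0_action: "group_action_on G (carrier B) pb0"
  unfolding group_action_on_def
  using hom_in_carrier[OF pb0_hom] pb0_one pb0_mult by blast

lemma pb0_iso:
  assumes g: "g \<in> carrier G"
  shows "pb0 g \<in> iso B B"
proof -
  have ig: "inv\<^bsub>G\<^esub> g \<in> carrier G" using g group.inv_closed[OF Ggrp] by blast
  have l: "\<forall>a\<in>carrier B. pb0 (inv\<^bsub>G\<^esub> g) (pb0 g a) = a"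
    using pb0_mult[OF ig g] pb0_one group.l_inv[OF Ggrp g] by metis
  have r: "\<forall>a\<in>carrier B. pb0 g (pb0 (inv\<^bsub>G\<^esub> g) a) = a"
    using pb0_mult[OF g ig] pb0_one group.r_inv[OF Ggrp g] by metis
  have "bij_betw (pb0 g) (carrier B) (carrier B)"
    by (rule bij_betw_byWitness[OF l r]) (use hom_in_carrier[OF pb0_hom[OF g]] hom_in_carrier[OF pb0_hom[OF ig]] in blast)+
  then show ?thesis unfolding iso_def using pb0_hom[OF g] by blast
qed


lemma ltrans_open:
  assumes "openin TB W" "w \<in> carrier B"
  shows "openin TB {v \<in> carrier B. w \<otimes>\<^bsub>B\<^esub> v \<in> W}"
proof -
  have m: "continuous_map (prod_topology TB TB) TB (\<lambda>(x, y). x \<otimes>\<^bsub>B\<^esub> y)"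
    using Btg unfolding topological_group_def by blast
  have p: "continuous_map TB (prod_topology TB TB) (\<lambda>v. (w, v))"
    by (rule continuous_map_pairedI) (simp_all add: topTB assms(2))
  have "continuous_map TB TB ((\<lambda>(x, y). x \<otimes>\<^bsub>B\<^esub> y) \<circ> (\<lambda>v. (w, v)))"
    by (rule continuous_map_compose[OF p m])
  then have "continuous_map TB TB (\<lambda>v. w \<otimes>\<^bsub>B\<^esub> v)" by (simp add: o_def)
  from openin_continuous_map_preimage[OF this assms(1)] show ?thesis by (simp add: topTB)
qed

lemma openH:
  assumes "openin TB W" "w \<in> W"
  shows "\<exists>H. subgroup H B \<and> openin TB H \<and> (\<forall>v\<in>H. w \<otimes>\<^bsub>B\<^esub> v \<in> W)"
proof -
  have wc: "w \<in> carrier B" using openin_subset[OF assms(1)] assms(2) topTB by blast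
  define L where "L = {v \<in> carrier B. w \<otimes>\<^bsub>B\<^esub> v \<in> W}"
  have oL: "openin TB L" unfolding L_def by (rule ltrans_open[OF assms(1) wc])
  have "\<one>\<^bsub>B\<^esub> \<in> L" unfolding L_def using wc assms(2) by simp
  have na2: "\<forall>W. openin TB W \<and> \<one>\<^bsub>B\<^esub> \<in> W \<longrightarrow> (\<exists>H. subgroup H B \<and> openin TB H \<and> H \<subseteq> W)"
    using BNA unfolding NA_group_def by blast
  obtain H where "subgroup H B" "openin TB H" "H \<subseteq> L" using na2 oL \<open>\<one>\<^bsub>B\<^esub> \<in> L\<close> by blast
  then show ?thesis unfolding L_def by blast
qed

context
  fixes pb :: "'g \<Rightarrow> 'b \<Rightarrow> 'b"
  assumes pga: "group_action_on G (carrier B) pb"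
    and piso: "\<forall>g\<in>carrier G. pb g \<in> iso B B"
    and pgen0: "\<forall>g\<in>carrier G. \<forall>x\<in>S. pb g (i x) = i (\<pi> g x)"
begin

lemma phom: "g \<in> carrier G \<Longrightarrow> pb g \<in> hom B B" using piso unfolding iso_def by blast
lemma pgen: "g \<in> carrier G \<Longrightarrow> x \<in> S \<Longrightarrow> pb g (i x) = i (\<pi> g x)" using pgen0 by blast
lemma pcar: "g \<in> carrier G \<Longrightarrow> u \<in> carrier B \<Longrightarrow> pb g u \<in> carrier B" using hom_in_carrier[OF phom] by blast

lemma eqc:
  assumes H: "subgroup H B" "openin TB H" and g0: "g0 \<in> carrier G"
  shows "\<exists>N N'. openin T N \<and> g0 \<in> N \<and> subgroup N' B \<and> openin TB N' \<and> (\<forall>g\<in>N. \<forall>v\<in>N'. pb g v \<in> H)"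
proof -
  have eH: "eset H \<in> two_sided_unif B TB" using eset_unif[OF H(2) subgroup.one_closed[OF H(1)]] .
  obtain d1 where d1: "d1 \<in> U" "\<forall>(x, y)\<in>d1. (i x, i y) \<in> eset H"
    using iuc eH unfolding unif_continuous_def by blast
  obtain d2 N where d2: "d2 \<in> U" "openin T N" "g0 \<in> N" "\<forall>(x, y)\<in>d2. \<forall>g\<in>N. (\<pi> g x, \<pi> g y) \<in> d1"
    using piu_at[OF d1(1) g0] by blast
  obtain d3 where d3: "d3 \<in> U" "equiv S d3" "d3 \<subseteq> d2" using nonarch[OF d2(1)] by blast
  define N' where "N' = generate B (Xset B i d3)"
  have sg: "subgroup N' B" unfolding N'_def by (rule N_sub[OF d3(2)])
  have op: "openin TB N'" unfolding N'_def by (rule openN[OF d3(1,2)])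
  have main: "pb g v \<in> H" if g: "g \<in> N" and v: "v \<in> N'" for g v
  proof -
    have gc: "g \<in> carrier G" using openin_subset[OF d2(2)] g topT by blast
    interpret gh: group_hom B B "pb g" using ghom[OF Bgrp Bgrp phom[OF gc]] .
    have hX: "pb g w \<in> H" if w: "w \<in> Xset B i d3" for w
    proof -
      obtain x y where xy: "(x, y) \<in> d3" "w = i x \<otimes>\<^bsub>B\<^esub> i y" using w unfolding Xset_def by blast
      have xS: "x \<in> S" "y \<in> S" using equiv_sub[OF d3(2) xy(1)] by auto
      have "(\<pi> g x, \<pi> g y) \<in> d1" using d2(4) d3(3) xy(1) g by blast
      then have "(i (\<pi> g x), i (\<pi> g y)) \<in> eset H" using d1(2) by blast
      then have "i (\<pi> g x) \<otimes>\<^bsub>B\<^esub> i (\<pi> g y) \<in> H" using eset_mem by blast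
      moreover have "pb g w = i (\<pi> g x) \<otimes>\<^bsub>B\<^esub> i (\<pi> g y)"
        using xy(2) hom_mult[OF phom[OF gc]] iS xS pgen[OF gc] by simp
      ultimately show ?thesis by simp
    qed
    have "v \<in> generate B (Xset B i d3)" using v unfolding N'_def .
    then show ?thesis
    proof (induction v rule: generate.induct)
      case one
      then show ?case using subgroup.one_closed[OF H(1)] by simp
    next
      case (incl w)
      then show ?case using hX by blast
    next
      case (inv w)
      then have "w \<in> carrier B" using Xc[OF d3(2)] by blast
      then show ?case using inv hX Bb.binv by simp
    next
      case (eng a b)
      then have "a \<in> carrier B" "b \<in> carrier B"
        using group.generate_in_carrier[OF Bgrp Xc[OF d3(2)]] by auto
      then show ?case using eng hom_mult[OF phom[OF gc]] subgroup.m_closed[OF H(1)] by simp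
    qed
  qed
  show ?thesis using d2(2,3) sg op main by blast
qed

lemma pointwise:
  assumes H: "subgroup H B" "openin TB H" and g0: "g0 \<in> carrier G" and u: "u \<in> carrier B"
  shows "\<exists>N. openin T N \<and> g0 \<in> N \<and> (\<forall>g\<in>N. pb g u \<otimes>\<^bsub>B\<^esub> pb g0 u \<in> H)"
proof -
  have gensc: "\<exists>N. openin T N \<and> g0 \<in> N \<and> (\<forall>g\<in>N. pb g u \<otimes>\<^bsub>B\<^esub> pb g0 u \<in> H)"
    if uS: "u \<in> i ` S" for u
  proof -
    obtain x where x: "x \<in> S" "u = i x" using uS by blast
    have eH: "eset H \<in> two_sided_unif B TB" using eset_unif[OF H(2) subgroup.one_closed[OF H(1)]] .
    obtain d1 where d1: "d1 \<in> U" "\<forall>(x, y)\<in>d1. (i x, i y) \<in> eset H"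
      using iuc eH unfolding unif_continuous_def by blast
    obtain d where d: "d \<in> U" "equiv S d" "d \<subseteq> d1" using nonarch[OF d1(1)] by blast
    define z where "z = \<pi> g0 x"
    have zS: "z \<in> S" unfolding z_def using actS[OF g0 x(1)] .
    have oW: "openin (utop S U) (d``{z})" by (rule utop_class_open[OF unif d(1,2)])
    define P where "P = {p \<in> topspace (prod_topology T (utop S U)). (\<lambda>(g, x). \<pi> g x) p \<in> d``{z}}"
    have oP: "openin (prod_topology T (utop S U)) P"
      unfolding P_def by (rule openin_continuous_map_preimage[OF cont oW])
    have zz: "(z, z) \<in> d" using d(2) zS unfolding equiv_def refl_on_def by blast
    have gx: "(g0, x) \<in> P" unfolding P_def using g0 topT utop_topspace[OF unif] zz z_def by simp
    have oP': "\<forall>a b. (a, b) \<in> P \<longrightarrow> (\<exists>A1 A2. openin T A1 \<and> openin (utop S U) A2 \<and> a \<in> A1 \<and> b \<in> A2 \<and> A1 \<times> A2 \<subseteq> P)"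
      using oP by (simp only: openin_prod_topology_alt)
    have "\<exists>U1 V1. openin T U1 \<and> openin (utop S U) V1 \<and> g0 \<in> U1 \<and> x \<in> V1 \<and> U1 \<times> V1 \<subseteq> P"
      using oP'[rule_format, OF gx] .
    then obtain U1 V1 where UV: "openin T U1" "openin (utop S U) V1" "g0 \<in> U1" "x \<in> V1" "U1 \<times> V1 \<subseteq> P"
      by blast
    have "pb g u \<otimes>\<^bsub>B\<^esub> pb g0 u \<in> H" if g: "g \<in> U1" for g
    proof -
      have gc: "g \<in> carrier G" using openin_subset[OF UV(1)] g topT by blast
      have "(g, x) \<in> P" using UV(4,5) g by blast
      then have "(z, \<pi> g x) \<in> d" unfolding P_def by simp
      then have "(i z, i (\<pi> g x)) \<in> eset H" using d(3) d1(2) by blast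
      then have "i z \<otimes>\<^bsub>B\<^esub> i (\<pi> g x) \<in> H" "i z \<in> carrier B" "i (\<pi> g x) \<in> carrier B"
        using eset_mem by blast+
      then have "i (\<pi> g x) \<otimes>\<^bsub>B\<^esub> i z \<in> H" using Bb.m_comm by simp
      then show ?thesis using pgen[OF gc x(1)] pgen[OF g0 x(1)] x(2) z_def by simp
    qed
    then show ?thesis using UV(1,3) by blast
  qed
  have "u \<in> generate B (i ` S)" using gen u by simp
  then show ?thesis
  proof (induction u rule: generate.induct)
    case one
    have "pb g \<one>\<^bsub>B\<^esub> = \<one>\<^bsub>B\<^esub>" if "g \<in> carrier G" for g
      using hom_one[OF phom[OF \<open>g \<in> carrier G\<close>] Bgrp Bgrp] by simp
    then have "\<forall>g\<in>topspace T. pb g \<one>\<^bsub>B\<^esub> \<otimes>\<^bsub>B\<^esub> pb g0 \<one>\<^bsub>B\<^esub> \<in> H"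
      using g0 topT subgroup.one_closed[OF H(1)] by simp
    then show ?case using g0 topT by blast
  next
    case (incl h)
    then show ?case using gensc by blast
  next
    case (inv h)
    then have "h \<in> carrier B" using iS by blast
    then show ?case using inv gensc Bb.binv by simp
  next
    case (eng a b)
    then have ab: "a \<in> carrier B" "b \<in> carrier B" using gen by auto
    obtain Na where Na: "openin T Na" "g0 \<in> Na" "\<forall>g\<in>Na. pb g a \<otimes>\<^bsub>B\<^esub> pb g0 a \<in> H"
      using eng(3) by blast
    obtain Nb where Nb: "openin T Nb" "g0 \<in> Nb" "\<forall>g\<in>Nb. pb g b \<otimes>\<^bsub>B\<^esub> pb g0 b \<in> H"
      using eng(4) by blast
    have "pb g (a \<otimes>\<^bsub>B\<^esub> b) \<otimes>\<^bsub>B\<^esub> pb g0 (a \<otimes>\<^bsub>B\<^esub> b) \<in> H" if g: "g \<in> Na \<inter> Nb" for g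
    proof -
      have gc: "g \<in> carrier G" using openin_subset[OF Na(1)] g topT by blast
      have c: "pb g a \<in> carrier B" "pb g b \<in> carrier B" "pb g0 a \<in> carrier B" "pb g0 b \<in> carrier B"
        using pcar gc g0 ab by auto
      have "pb g (a \<otimes>\<^bsub>B\<^esub> b) \<otimes>\<^bsub>B\<^esub> pb g0 (a \<otimes>\<^bsub>B\<^esub> b)
          = (pb g a \<otimes>\<^bsub>B\<^esub> pb g0 a) \<otimes>\<^bsub>B\<^esub> (pb g b \<otimes>\<^bsub>B\<^esub> pb g0 b)"
        using hom_mult[OF phom[OF gc] ab] hom_mult[OF phom[OF g0] ab] c
        by (simp add: Bb.m_ac)
      then show ?thesis using Na(3) Nb(3) g subgroup.m_closed[OF H(1)] by simp
    qed
    then show ?case using Na(1,2) Nb(1,2) by blast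
  qed
qed

lemma pcont: "continuous_map (prod_topology T TB) TB (\<lambda>(g, u). pb g u)"
  unfolding continuous_map_def
proof (intro conjI allI impI)
  show "(\<lambda>(g, u). pb g u) \<in> topspace (prod_topology T TB) \<rightarrow> topspace TB"
    using pcar topT topTB by auto
  fix W assume W: "openin TB W"
  show "openin (prod_topology T TB) {p \<in> topspace (prod_topology T TB). (\<lambda>(g, u). pb g u) p \<in> W}"
  proof (subst openin_subopen, intro ballI)
    fix p assume p: "p \<in> {p \<in> topspace (prod_topology T TB). (\<lambda>(g, u). pb g u) p \<in> W}"
    obtain g0 u0 where p0: "p = (g0, u0)" by (cases p)
    have g0: "g0 \<in> carrier G" and u0: "u0 \<in> carrier B" and w0: "pb g0 u0 \<in> W"
      using p p0 topT topTB by auto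
    define w where "w = pb g0 u0"
    obtain H where H: "subgroup H B" "openin TB H" "\<forall>v\<in>H. w \<otimes>\<^bsub>B\<^esub> v \<in> W"
      using openH[OF W w0] unfolding w_def by blast
    obtain N1 N' where N1: "openin T N1" "g0 \<in> N1" "subgroup N' B" "openin TB N'" "\<forall>g\<in>N1. \<forall>v\<in>N'. pb g v \<in> H"
      using eqc[OF H(1,2) g0] by blast
    obtain N2 where N2: "openin T N2" "g0 \<in> N2" "\<forall>g\<in>N2. pb g u0 \<otimes>\<^bsub>B\<^esub> pb g0 u0 \<in> H"
      using pointwise[OF H(1,2) g0 u0] by blast
    define V where "V = {v \<in> carrier B. u0 \<otimes>\<^bsub>B\<^esub> v \<in> N'}"
    have oV: "openin TB V" unfolding V_def by (rule ltrans_open[OF N1(4) u0])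
    have u0V: "u0 \<in> V" unfolding V_def using u0 Bb.sq subgroup.one_closed[OF N1(3)] by simp
    have oB: "openin (prod_topology T TB) ((N1 \<inter> N2) \<times> V)"
      using openin_prod_Times_iff N1(1) N2(1) oV by blast
    have sub: "(N1 \<inter> N2) \<times> V \<subseteq> {p \<in> topspace (prod_topology T TB). (\<lambda>(g, u). pb g u) p \<in> W}"
    proof (intro subsetI)
      fix q assume q: "q \<in> (N1 \<inter> N2) \<times> V"
      obtain g u where qgu: "q = (g, u)" by (cases q)
      have g: "g \<in> N1" "g \<in> N2" and u: "u \<in> V" using q qgu by auto
      have gc: "g \<in> carrier G" using openin_subset[OF N1(1)] g topT by blast
      have uc: "u \<in> carrier B" and uN: "u0 \<otimes>\<^bsub>B\<^esub> u \<in> N'" using u unfolding V_def by auto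
      have c: "pb g u0 \<in> carrier B" "w \<in> carrier B" "pb g (u0 \<otimes>\<^bsub>B\<^esub> u) \<in> carrier B"
        using pcar gc g0 u0 uc unfolding w_def by auto
      have h1: "pb g u0 \<otimes>\<^bsub>B\<^esub> w \<in> H" using N2(3) g(2) unfolding w_def by blast
      have h2: "pb g (u0 \<otimes>\<^bsub>B\<^esub> u) \<in> H" using N1(5) g(1) uN by blast
      have eq1: "u = u0 \<otimes>\<^bsub>B\<^esub> (u0 \<otimes>\<^bsub>B\<^esub> u)" using u0 uc Bb.sq by (simp add: Bb.m_assoc[symmetric])
      have "pb g u = pb g u0 \<otimes>\<^bsub>B\<^esub> pb g (u0 \<otimes>\<^bsub>B\<^esub> u)"
        using hom_mult[OF phom[OF gc] u0] uc u0 eq1 by (metis Bb.m_closed)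
      also have "\<dots> = (w \<otimes>\<^bsub>B\<^esub> w) \<otimes>\<^bsub>B\<^esub> (pb g u0 \<otimes>\<^bsub>B\<^esub> pb g (u0 \<otimes>\<^bsub>B\<^esub> u))"
        using c Bb.sq by simp
      also have "\<dots> = w \<otimes>\<^bsub>B\<^esub> ((pb g u0 \<otimes>\<^bsub>B\<^esub> w) \<otimes>\<^bsub>B\<^esub> pb g (u0 \<otimes>\<^bsub>B\<^esub> u))"
        using c by (simp add: Bb.m_ac)
      finally have "pb g u = w \<otimes>\<^bsub>B\<^esub> ((pb g u0 \<otimes>\<^bsub>B\<^esub> w) \<otimes>\<^bsub>B\<^esub> pb g (u0 \<otimes>\<^bsub>B\<^esub> u))" .
      moreover have "(pb g u0 \<otimes>\<^bsub>B\<^esub> w) \<otimes>\<^bsub>B\<^esub> pb g (u0 \<otimes>\<^bsub>B\<^esub> u) \<in> H"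
        using h1 h2 subgroup.m_closed[OF H(1)] by blast
      ultimately have "pb g u \<in> W" using H(3) by simp
      then show "q \<in> {p \<in> topspace (prod_topology T TB). (\<lambda>(g, u). pb g u) p \<in> W}"
        using gc uc topT topTB qgu by simp
    qed
    show "\<exists>T'. openin (prod_topology T TB) T' \<and> p \<in> T' \<and> T' \<subseteq> {p \<in> topspace (prod_topology T TB). (\<lambda>(g, u). pb g u) p \<in> W}"
      using oB sub p0 N1(2) N2(2) u0V by blast
  qed
qed

end


end

theorem theorem7p6:
  fixes G :: "'g monoid" and T :: "'g topology"
    and S :: "'a set" and U :: "('a \<times> 'a) set set" and \<pi> :: "'g \<Rightarrow> 'a \<Rightarrow> 'a"
    and B :: "'b monoid" and TB :: "'b topology" and i :: "'a \<Rightarrow> 'b"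
  assumes "topological_group G T"
    and "nonarch_uniformity S U"
    and "group_action_on G S \<pi>"
    and "continuous_map (prod_topology T (utop S U)) (utop S U) (\<lambda>(g, x). \<pi> g x)"
    and "pi_uniform T S U \<pi>"
    and "free_boolean_NA S U B TB i"
  shows "(\<exists>\<pi>b. group_action_on G (carrier B) \<pi>b \<and> (\<forall>g\<in>carrier G. \<pi>b g \<in> iso B B) \<and>
              (\<forall>g\<in>carrier G. \<forall>x\<in>S. \<pi>b g (i x) = i (\<pi> g x))) \<and>
         (\<forall>\<pi>b. group_action_on G (carrier B) \<pi>b \<and> (\<forall>g\<in>carrier G. \<pi>b g \<in> iso B B) \<and>
              (\<forall>g\<in>carrier G. \<forall>x\<in>S. \<pi>b g (i x) = i (\<pi> g x)) \<longrightarrow>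
              continuous_map (prod_topology T TB) TB (\<lambda>(g, u). \<pi>b g u)) \<and>
         unif_embedding S U (carrier B) (two_sided_unif B TB) i \<and>
         unif_G_automorphizable_NA TYPE('b) G T S U \<pi>"
proof -
  interpret c: ctx G T S U \<pi> B TB i
    by (rule ctx.intro) (rule assms)+
  have a1: "group_action_on G (carrier B) c.pb0" by (rule c.pb0_action)
  have a2: "\<forall>g\<in>carrier G. c.pb0 g \<in> iso B B" using c.pb0_iso by blast
  have a3: "\<forall>g\<in>carrier G. \<forall>x\<in>S. c.pb0 g (i x) = i (\<pi> g x)" using c.pb0_gen by blast
  have e1: "\<exists>\<pi>b. group_action_on G (carrier B) \<pi>b \<and> (\<forall>g\<in>carrier G. \<pi>b g \<in> iso B B) \<and>
              (\<forall>g\<in>carrier G. \<forall>x\<in>S. \<pi>b g (i x) = i (\<pi> g x))"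
    using a1 a2 a3 by blast
  have e2: "\<forall>\<pi>b. group_action_on G (carrier B) \<pi>b \<and> (\<forall>g\<in>carrier G. \<pi>b g \<in> iso B B) \<and>
              (\<forall>g\<in>carrier G. \<forall>x\<in>S. \<pi>b g (i x) = i (\<pi> g x)) \<longrightarrow>
              continuous_map (prod_topology T TB) TB (\<lambda>(g, u). \<pi>b g u)"
  proof (intro allI impI)
    fix pb assume h: "group_action_on G (carrier B) pb \<and> (\<forall>g\<in>carrier G. pb g \<in> iso B B) \<and>
              (\<forall>g\<in>carrier G. \<forall>x\<in>S. pb g (i x) = i (\<pi> g x))"
    then have h1: "group_action_on G (carrier B) pb" and h2: "\<forall>g\<in>carrier G. pb g \<in> iso B B"
      and h3: "\<forall>g\<in>carrier G. \<forall>x\<in>S. pb g (i x) = i (\<pi> g x)" by auto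
    show "continuous_map (prod_topology T TB) TB (\<lambda>(g, u). pb g u)" by (rule c.pcont[OF h1 h2 h3])
  qed
  have e3: "unif_embedding S U (carrier B) (two_sided_unif B TB) i" by (rule c.emb)
  have ca: "cont_action_by_automorphisms G T B TB c.pb0"
    unfolding cont_action_by_automorphisms_def using a1 a2 c.pcont[OF a1 a2 a3] by blast
  have eq: "\<forall>g\<in>carrier G. \<forall>x\<in>S. i (\<pi> g x) = c.pb0 g (i x)" using a3 by simp
  have e4: "unif_G_automorphizable_NA TYPE('b) G T S U \<pi>"
    unfolding unif_G_automorphizable_NA_def using c.BNA ca e3 eq by blast
  show ?thesis using e1 e2 e3 e4 by (intro conjI)
qed

end
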